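(* Let $k\geq1$ and let $w$ be a reduced word on $\{\alpha_k^{\pm1},\dots,\alpha_1^{\pm1},\beta^{\pm1}\}$. For every finite subset $F$ of the vertex set $X$ of the pre-graph $G_0$, there is an extension $G$ of $G_0$ (with labels in $\{\alpha_k^{\pm1},\dots,\alpha_1^{\pm1},\beta^{\pm1}\}$) such that the path $P(w,v_0)$ embeds in $G$, the image of $P(w,v_0)$ in $G$ contains no vertex of $F$, and $G\setminus G_0$ (the set of edges of $G$ not in $G_0$) is finite.
   Context: A graph consists of a vertex set $V$, an edge set $E$, a fixed-point-free involution $e\mapsto\bar e$ on $E$, and maps $i,t:E\to V$ (initial and terminal vertex) with $i(\bar e)=t(e)$. A labeling on $S^{\pm1}=S\cup S^{-1}$ is a map $l:E\to S^{\pm1}$ with $l(\bar e)=l(e)^{-1}$. A labeled graph is well-labeled if $i(e)=i(e')$ and $l(e)=l(e')$ imply $e=e'$. A homomorphism of labeled graphs maps vertices to vertices and edges to edges, preserving $i$, $t$ and labels; an embedding is an injective homomorphism. A word $w_m\cdots w_1$ is reduced if $w_{j+1}\neq w_j^{-1}$ for all $j$. For a reduced word $w=w_m\cdots w_1$, the path $P(w,v_0)$ is the labeled graph with $m+1$ distinct vertices $v_0,v_1,\dots,v_m$ and directed edges $e_1,\dots,e_m$ (together with their inverses) where $e_j$ goes from $v_{j-1}$ to $v_j$ and has label $w_j$. Let $X$ be an infinite countable set and $\beta$ a permutation of $X$ acting simply transitively (so $X\cong\mathbb{Z}$ and $\beta$ is $x\mapsto x+1$). The pre-graph $G_0$ has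 vertex set $X$ and, for each $x\in X$, one directed edge from $x$ to $\beta(x)$ labeled $\beta$ (together with its inverse edge, labeled $\beta^{-1}$). An extension of $G_0$ is a well-labeled graph labeled on $\{\alpha_k^{\pm1},\dots,\alpha_1^{\pm1},\beta^{\pm1}\}$ which contains $G_0$ and has vertex set exactly $X$. *)

theory Defs
  imports Main
begin

text \<open>Letters: a letter is a pair (i, s). Index 0 stands for beta, index i (1 \<le> i \<le> k)
  stands for alpha_i; s = True means exponent +1, s = False exponent -1.\<close>
type_synonym letter = "nat \<times> bool"

definition linv :: "letter \<Rightarrow> letter" where
  "linv a = (fst a, \<not> snd a)"

definition beta :: letter where "beta = (0, True)"

definition alphabet :: "nat \<Rightarrow> letter set" where
  "alphabet k = {a. fst a \<le> k}"

record ('v, 'e) lgraph =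
  verts :: "'v set"
  edges :: "'e set"
  bar :: "'e \<Rightarrow> 'e"
  ini :: "'e \<Rightarrow> 'v"
  ter :: "'e \<Rightarrow> 'v"
  lab :: "'e \<Rightarrow> letter"

definition is_graph :: "('v, 'e) lgraph \<Rightarrow> bool" where
  "is_graph G \<longleftrightarrow>
     (\<forall>e \<in> edges G. ini G e \<in> verts G \<and> ter G e \<in> verts G \<and> bar G e \<in> edges G
        \<and> bar G (bar G e) = e \<and> bar G e \<noteq> e \<and> ini G (bar G e) = ter G e)"

definition labeled_on :: "letter set \<Rightarrow> ('v, 'e) lgraph \<Rightarrow> bool" where
  "labeled_on S G \<longleftrightarrow> is_graph G \<and>
     (\<forall>e \<in> edges G. lab G e \<in> S \<and> lab G (bar G e) = linv (lab G e))"

definition well_labeled :: "('v, 'e) lgraph \<Rightarrow> bool" where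
  "well_labeled G \<longleftrightarrow>
     (\<forall>e \<in> edges G. \<forall>e' \<in> edges G. ini G e = ini G e' \<and> lab G e = lab G e' \<longrightarrow> e = e')"

definition homomorphism ::
  "('v, 'e) lgraph \<Rightarrow> ('w, 'f) lgraph \<Rightarrow> ('v \<Rightarrow> 'w) \<Rightarrow> ('e \<Rightarrow> 'f) \<Rightarrow> bool" where
  "homomorphism A B fv fe \<longleftrightarrow>
     fv ` verts A \<subseteq> verts B \<and> fe ` edges A \<subseteq> edges B \<and>
     (\<forall>e \<in> edges A. ini B (fe e) = fv (ini A e) \<and> ter B (fe e) = fv (ter A e)
        \<and> lab B (fe e) = lab A e)"

definition embedding ::
  "('v, 'e) lgraph \<Rightarrow> ('w, 'f) lgraph \<Rightarrow> ('v \<Rightarrow> 'w) \<Rightarrow> ('e \<Rightarrow> 'f) \<Rightarrow> bool" where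
  "embedding A B fv fe \<longleftrightarrow>
     homomorphism A B fv fe \<and> inj_on fv (verts A) \<and> inj_on fe (edges A)"

definition subgraph :: "('v, 'e) lgraph \<Rightarrow> ('v, 'e) lgraph \<Rightarrow> bool" where
  "subgraph A B \<longleftrightarrow> verts A \<subseteq> verts B \<and> edges A \<subseteq> edges B \<and>
     (\<forall>e \<in> edges A. bar B e = bar A e \<and> ini B e = ini A e \<and> ter B e = ter A e
        \<and> lab B e = lab A e)"

text \<open>Words: a word w = w_m ... w_1 is the list [w_m, ..., w_1] (written order);
  its j-th letter w_j (1 \<le> j \<le> m) is ws ! (m - j).\<close>
definition wletter :: "letter list \<Rightarrow> nat \<Rightarrow> letter" where
  "wletter ws j = ws ! (length ws - j)"

definition reduced_word :: "nat \<Rightarrow> letter list \<Rightarrow> bool" where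
  "reduced_word k ws \<longleftrightarrow> set ws \<subseteq> alphabet k \<and>
     (\<forall>j. 1 \<le> j \<and> j < length ws \<longrightarrow> wletter ws (j + 1) \<noteq> linv (wletter ws j))"

text \<open>The path P(w, v_0): vertices v_0..v_m are 0..m; edge (j, True) is e_j from v_{j-1}
  to v_j labeled w_j, edge (j, False) is its inverse.\<close>
definition path_graph :: "letter list \<Rightarrow> (nat, nat \<times> bool) lgraph" where
  "path_graph ws = \<lparr> verts = {0..length ws},
     edges = {(j, b). 1 \<le> j \<and> j \<le> length ws},
     bar = (\<lambda>(j, b). (j, \<not> b)),
     ini = (\<lambda>(j, b). if b then j - 1 else j),
     ter = (\<lambda>(j, b). if b then j else j - 1),
     lab = (\<lambda>(j, b). if b then wletter ws j else linv (wletter ws j)) \<rparr>"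

text \<open>X = int, beta acts as x \<mapsto> x + 1. Edges of extensions are named by elements of
  int \<times> letter \<times> int (a countably infinite type, so no generality is lost); the
  pre-graph edges are (x, beta, x+1) and their inverses (x+1, beta^-1, x).\<close>
type_synonym edge = "int \<times> letter \<times> int"

definition G0 :: "(int, edge) lgraph" where
  "G0 = \<lparr> verts = UNIV,
     edges = {(x, beta, x + 1) | x. True} \<union> {(x + 1, linv beta, x) | x. True},
     bar = (\<lambda>(x, a, y). (y, linv a, x)),
     ini = (\<lambda>(x, a, y). x),
     ter = (\<lambda>(x, a, y). y),
     lab = (\<lambda>(x, a, y). a) \<rparr>"

definition extension :: "nat \<Rightarrow> (int, edge) lgraph \<Rightarrow> bool" where
  "extension k G \<longleftrightarrow> labeled_on (alphabet k) G \<and> well_labeled G \<and> subgraph G0 G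
     \<and> verts G = UNIV"

end

theory Submission
  imports Defs
begin

definition stp :: "nat \<Rightarrow> letter \<Rightarrow> int" where
  "stp m a = (if a = beta then 1 else if a = linv beta then -1 else int m + 1)"

fun walk :: "int \<Rightarrow> letter list \<Rightarrow> nat \<Rightarrow> int" where
  "walk C ws 0 = C"
| "walk C ws (Suc j) = walk C ws j + stp (length ws) (wletter ws (Suc j))"

lemma linv_simps[simp]: "linv (linv a) = a" "linv a \<noteq> a" "a \<noteq> linv a" "linv beta \<noteq> beta" "beta \<noteq> linv beta"
  "linv a = b \<longleftrightarrow> a = linv b"
  by (auto simp: linv_def beta_def prod_eq_iff)

lemma stp_ge: "stp m a \<ge> -1" by (simp add: stp_def)

lemma walk_ge: "walk C ws j \<ge> C - int j"
proof (induction j)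
  case (Suc j)
  have "stp (length ws) (wletter ws (Suc j)) \<ge> -1" by (rule stp_ge)
  then show ?case using Suc by simp
qed simp

lemma walk_Q:
  assumes red: "reduced_word k ws" and "i < j" "j \<le> length ws"
  shows "(walk C ws j - walk C ws i = int (j - i) \<and> wletter ws j = beta)
       \<or> (walk C ws j - walk C ws i = - int (j - i) \<and> wletter ws j = linv beta)
       \<or> walk C ws j - walk C ws i \<ge> int (length ws) + 2 - int (j - i)"
  (is "?P j")
  using assms(2,3)
proof (induction j)
  case 0 then show ?case by simp
next
  case (Suc j)
  show ?case
  proof (cases "i = j")
    case True
    then show ?thesis by (auto simp: stp_def)
  next
    case False
    then have ij: "i < j" using Suc by simp
    have IH: "?P j" using Suc.IH[OF ij] Suc.prems by simp
    have rj: "wletter ws (j + 1) \<noteq> linv (wletter ws j)"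
      using red ij Suc.prems unfolding reduced_word_def by auto
    have s: "walk C ws (Suc j) - walk C ws i = (walk C ws j - walk C ws i) + stp (length ws) (wletter ws (Suc j))"
      by simp
    have sg: "stp (length ws) (wletter ws (Suc j)) \<ge> -1" by (rule stp_ge)
    from IH show ?thesis
    proof (elim disjE conjE)
      assume a: "walk C ws j - walk C ws i = int (j - i)" "wletter ws j = beta"
      then have "wletter ws (Suc j) \<noteq> linv beta" using rj by simp
      then show ?thesis using a s ij Suc.prems
        by (cases "wletter ws (Suc j) = beta") (auto simp: stp_def)
    next
      assume a: "walk C ws j - walk C ws i = - int (j - i)" "wletter ws j = linv beta"
      then have "wletter ws (Suc j) \<noteq> beta" using rj by auto
      then show ?thesis using a s ij Suc.prems
        by (cases "wletter ws (Suc j) = linv beta") (auto simp: stp_def)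
    next
      assume a: "walk C ws j - walk C ws i \<ge> int (length ws) + 2 - int (j - i)"
      then show ?thesis using s sg ij by auto
    qed
  qed
qed

lemma walk_inj:
  assumes red: "reduced_word k ws"
  shows "inj_on (walk C ws) {0..length ws}"
proof -
  have ne: "walk C ws j \<noteq> walk C ws i" if "i < j" "j \<le> length ws" for i j
    using walk_Q[OF red that, of C] that by auto
  show ?thesis unfolding inj_on_def
    by (metis atLeastAtMost_iff ne linorder_neqE_nat)
qed

theorem lemma8:
  fixes k :: nat and ws :: "letter list" and F :: "int set"
  assumes "k \<ge> 1" and "reduced_word k ws" and "finite F"
  shows "\<exists>G :: (int, edge) lgraph. extension k G \<and>
           (\<exists>fv fe. embedding (path_graph ws) G fv fe
              \<and> fv ` verts (path_graph ws) \<inter> F = {})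
           \<and> finite (edges G - edges G0)"
proof -
  define m where "m = length ws"
  define C where "C = Max (insert 0 F) + int m + 1"
  define fv where "fv = walk C ws"
  define w where "w = wletter ws"
  define fe where "fe = (\<lambda>(j::nat, b::bool). if b then (fv (j - 1), w j, fv j)
                                     else (fv j, linv (w j), fv (j - 1)))"
  define PE where "PE = fe ` edges (path_graph ws)"
  define G where "G = G0\<lparr>edges := edges G0 \<union> PE\<rparr>"
  have injv: "inj_on fv {0..m}" unfolding fv_def m_def by (rule walk_inj[OF assms(2)])
  have red: "\<And>j. 1 \<le> j \<Longrightarrow> j < m \<Longrightarrow> w (j + 1) \<noteq> linv (w j)"
    using assms(2) unfolding reduced_word_def w_def m_def by auto
  have walph: "\<And>j. 1 \<le> j \<Longrightarrow> j \<le> m \<Longrightarrow> w j \<in> alphabet k"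
  proof -
    fix j assume "1 \<le> j" "j \<le> m"
    then have "ws ! (m - j) \<in> set ws" unfolding m_def by auto
    then show "w j \<in> alphabet k" using assms(2) unfolding reduced_word_def w_def wletter_def m_def by auto
  qed
  have fvS: "fv (Suc j) = fv j + stp m (w (Suc j))" for j
    unfolding fv_def w_def m_def by simp
  have PE_def': "PE = {e. \<exists>j. 1 \<le> j \<and> j \<le> m \<and> (e = (fv (j - 1), w j, fv j) \<or> e = (fv j, linv (w j), fv (j - 1)))}"
  proof -
    have ep0: "edges (path_graph ws) = {(j, b). 1 \<le> j \<and> j \<le> m}" by (simp add: path_graph_def m_def)
    show ?thesis
    proof (intro equalityI subsetI)
      fix e assume "e \<in> PE"
      then obtain j b where "1 \<le> j" "j \<le> m" "e = fe (j, b)" unfolding PE_def ep0 by auto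
      then show "e \<in> {e. \<exists>j. 1 \<le> j \<and> j \<le> m \<and> (e = (fv (j - 1), w j, fv j) \<or> e = (fv j, linv (w j), fv (j - 1)))}"
        by (cases b) (auto simp: fe_def)
    next
      fix e assume "e \<in> {e. \<exists>j. 1 \<le> j \<and> j \<le> m \<and> (e = (fv (j - 1), w j, fv j) \<or> e = (fv j, linv (w j), fv (j - 1)))}"
      then obtain j where j: "1 \<le> j" "j \<le> m" "e = fe (j, True) \<or> e = fe (j, False)"
        by (auto simp: fe_def)
      then show "e \<in> PE" unfolding PE_def ep0 by auto
    qed
  qed
  have G0e: "edges G0 = {(x, beta, x + 1) | x. True} \<union> {(x + 1, linv beta, x) | x. True}"
    by (simp add: G0_def)
  have eG: "edges G = edges G0 \<union> PE" "bar G = (\<lambda>(x, a, y). (y, linv a, x))"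
    "ini G = (\<lambda>(x, a, y). x)" "ter G = (\<lambda>(x, a, y). y)" "lab G = (\<lambda>(x, a, y). a)"
    "verts G = UNIV"
    by (simp_all add: G_def G0_def)
  have barc: "(y, linv a, x) \<in> edges G" if "(x, a, y) \<in> edges G" for x a y
  proof -
    from that have "(x, a, y) \<in> edges G0 \<or> (x, a, y) \<in> PE" using eG by auto
    then show ?thesis
    proof
      assume "(x, a, y) \<in> edges G0" then show ?thesis using eG G0e by auto
    next
      assume "(x, a, y) \<in> PE"
      then show ?thesis unfolding eG(1) PE_def' by auto
    qed
  qed
  have betaE: "(a = beta \<longrightarrow> y = x + 1) \<and> (a = linv beta \<longrightarrow> y = x - 1)"
    if "(x, a, y) \<in> edges G" for x a y
  proof -
    from that have "(x, a, y) \<in> edges G0 \<or> (x, a, y) \<in> PE" using eG by auto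
    then show ?thesis
    proof
      assume "(x, a, y) \<in> edges G0" then show ?thesis using G0e by auto
    next
      assume "(x, a, y) \<in> PE"
      then obtain j where j: "1 \<le> j" "j \<le> m"
        "(x, a, y) = (fv (j - 1), w j, fv j) \<or> (x, a, y) = (fv j, linv (w j), fv (j - 1))"
        unfolding PE_def' by blast
      have "fv j = fv (j - 1) + stp m (w j)" using fvS[of "j - 1"] j by simp
      then show ?thesis using j by (auto simp: stp_def)
    qed
  qed
  have alphE: "(x, a, y) \<in> PE" if "(x, a, y) \<in> edges G" "fst a \<noteq> 0" for x a y
    using that eG G0e by (auto simp: linv_def beta_def)
  have G0lab: "fst a = 0 \<Longrightarrow> a = beta \<or> a = linv beta" for a :: letter
    by (cases a) (auto simp: linv_def beta_def)
  have wl: "well_labeled G"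
    unfolding well_labeled_def
  proof (intro ballI impI)
    fix e e' assume e: "e \<in> edges G" and e': "e' \<in> edges G" and h: "ini G e = ini G e' \<and> lab G e = lab G e'"
    obtain x a y where ex: "e = (x, a, y)" by (cases e) auto
    obtain y' where ex': "e' = (x, a, y')" using h eG ex by (cases e') auto
    show "e = e'"
    proof (cases "fst a = 0")
      case True
      then show ?thesis using G0lab[OF True] betaE[of x a y] betaE[of x a y'] e e' ex ex' by auto
    next
      case False
      have p1: "(x, a, y) \<in> PE" using alphE False e ex by simp
      have p2: "(x, a, y') \<in> PE" using alphE False e' ex' by simp
      from p1 obtain j where j: "1 \<le> j" "j \<le> m"
        "(x, a, y) = (fv (j - 1), w j, fv j) \<or> (x, a, y) = (fv j, linv (w j), fv (j - 1))"
        unfolding PE_def' by blast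
      from p2 obtain j' where j': "1 \<le> j'" "j' \<le> m"
        "(x, a, y') = (fv (j' - 1), w j', fv j') \<or> (x, a, y') = (fv j', linv (w j'), fv (j' - 1))"
        unfolding PE_def' by blast
      have iv: "\<And>p q. p \<le> m \<Longrightarrow> q \<le> m \<Longrightarrow> fv p = fv q \<Longrightarrow> p = q"
        using injv unfolding inj_on_def by auto
      from j(3) j'(3) show ?thesis
      proof (elim disjE)
        assume "(x, a, y) = (fv (j - 1), w j, fv j)" "(x, a, y') = (fv (j' - 1), w j', fv j')"
        then have x1: "x = fv (j - 1)" "x = fv (j' - 1)" "y = fv j" "y' = fv j'" by simp_all
        have "j - 1 = j' - 1" by (rule iv) (use j j' x1 in auto)
        then have "j = j'" using j j' by simp
        then show ?thesis using ex ex' x1 by simp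
      next
        assume "(x, a, y) = (fv j, linv (w j), fv (j - 1))" "(x, a, y') = (fv j', linv (w j'), fv (j' - 1))"
        then have x1: "x = fv j" "x = fv j'" "y = fv (j - 1)" "y' = fv (j' - 1)" by simp_all
        have "j = j'" by (rule iv) (use j j' x1 in auto)
        then show ?thesis using ex ex' x1 by simp
      next
        assume A: "(x, a, y) = (fv (j - 1), w j, fv j)" "(x, a, y') = (fv j', linv (w j'), fv (j' - 1))"
        from A have x1: "x = fv (j - 1)" "a = w j" "x = fv j'" "a = linv (w j')" by simp_all
        have "j - 1 = j'" by (rule iv) (use j j' x1(1,3) in auto)
        then have jj: "j = j' + 1" using j by simp
        have "w (j' + 1) = linv (w j')" using x1(2,4) jj by simp
        moreover have "j' < m" "1 \<le> j'" using jj j j' by simp_all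
        ultimately show ?thesis using red by blast
      next
        assume A: "(x, a, y) = (fv j, linv (w j), fv (j - 1))" "(x, a, y') = (fv (j' - 1), w j', fv j')"
        from A have x1: "x = fv j" "a = linv (w j)" "x = fv (j' - 1)" "a = w j'" by simp_all
        have "j' - 1 = j" by (rule iv) (use j j' x1(1,3) in auto)
        then have jj: "j' = j + 1" using j' by simp
        have "w (j + 1) = linv (w j)" using x1(2,4) jj by simp
        moreover have "j < m" "1 \<le> j" using jj j j' by simp_all
        ultimately show ?thesis using red by blast
      qed
    qed
  qed
  have isg: "is_graph G"
    unfolding is_graph_def using barc eG by auto
  have labd: "lab G e \<in> alphabet k" if eE: "e \<in> edges G" for e
  proof -
    obtain x a y where ex: "e = (x, a, y)" by (cases e) auto
    show ?thesis
    proof (cases "fst a = 0")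
      case True then show ?thesis using ex eG by (simp add: alphabet_def)
    next
      case False
      then obtain j where j: "1 \<le> j" "j \<le> m"
        "(x, a, y) = (fv (j - 1), w j, fv j) \<or> (x, a, y) = (fv j, linv (w j), fv (j - 1))"
        using alphE[of x a y] eE ex False unfolding PE_def' by auto
      then show ?thesis using walph[OF j(1,2)] ex eG by (auto simp: alphabet_def linv_def)
    qed
  qed
  have lo: "labeled_on (alphabet k) G"
    unfolding labeled_on_def using isg labd eG by auto
  have sg: "subgraph G0 G"
    unfolding subgraph_def using eG by (auto simp: G0_def)
  have ext: "extension k G" unfolding extension_def using lo wl sg eG by auto
  have vp: "verts (path_graph ws) = {0..m}" by (simp add: path_graph_def m_def)
  have ep: "edges (path_graph ws) = {(j, b). 1 \<le> j \<and> j \<le> m}" by (simp add: path_graph_def m_def)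
  have hom: "homomorphism (path_graph ws) G fv fe"
    unfolding homomorphism_def
  proof (intro conjI ballI)
    show "fv ` verts (path_graph ws) \<subseteq> verts G" using eG by simp
    show "fe ` edges (path_graph ws) \<subseteq> edges G" using eG PE_def by auto
  next
    fix e assume "e \<in> edges (path_graph ws)"
    then obtain j b where e: "e = (j, b)" "1 \<le> j" "j \<le> m" using ep by auto
    show "ini G (fe e) = fv (ini (path_graph ws) e)"
      "ter G (fe e) = fv (ter (path_graph ws) e)"
      "lab G (fe e) = lab (path_graph ws) e"
      using e eG by (auto simp: fe_def path_graph_def w_def)
  qed
  have inje: "inj_on fe (edges (path_graph ws))"
  proof (rule inj_onI)
    fix e e' assume a: "e \<in> edges (path_graph ws)" "e' \<in> edges (path_graph ws)" "fe e = fe e'"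
    obtain j b where e: "e = (j, b)" "1 \<le> j" "j \<le> m" using a ep by auto
    obtain j' b' where e': "e' = (j', b')" "1 \<le> j'" "j' \<le> m" using a ep by auto
    have iv: "\<And>p q. p \<le> m \<Longrightarrow> q \<le> m \<Longrightarrow> fv p = fv q \<Longrightarrow> p = q"
      using injv unfolding inj_on_def by auto
    show "e = e'"
    proof (cases b; cases b')
      assume "b" "b'" then show ?thesis using a e e' iv[of j j'] by (auto simp: fe_def)
    next
      assume "\<not> b" "\<not> b'" then show ?thesis using a e e' iv[of j j'] by (auto simp: fe_def)
    next
      assume "b" "\<not> b'"
      then have "fv j = fv (j' - 1)" "fv (j - 1) = fv j'" using a e e' by (auto simp: fe_def)
      then have "j = j' - 1" "j - 1 = j'" using iv e e' by auto
      then show ?thesis using e e' by auto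
    next
      assume "\<not> b" "b'"
      then have "fv j' = fv (j - 1)" "fv (j' - 1) = fv j" using a e e' by (auto simp: fe_def)
      then have "j' = j - 1" "j' - 1 = j" using iv e e' by auto
      then show ?thesis using e e' by auto
    qed
  qed
  have emb: "embedding (path_graph ws) G fv fe"
    unfolding embedding_def using hom inje injv vp by simp
  have avoid: "fv ` verts (path_graph ws) \<inter> F = {}"
  proof -
    { fix j assume j: "j \<le> m" and f: "fv j \<in> F"
      define f where "f = fv j"
      have eq: "fv j = f" by (simp add: f_def)
      have "f \<le> Max (insert 0 F)" using f assms(3) unfolding f_def by simp
      moreover have "fv j \<ge> C - int j" unfolding fv_def by (rule walk_ge)
      ultimately have False using eq j unfolding C_def by simp }
    then show ?thesis using vp by auto
  qed
  have fin: "finite (edges G - edges G0)"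
  proof -
    have "finite (edges (path_graph ws))"
    proof -
      have "edges (path_graph ws) \<subseteq> {1..m} \<times> UNIV" using ep by auto
      then show ?thesis by (rule finite_subset) simp
    qed
    then have "finite PE" unfolding PE_def by simp
    then show ?thesis using eG by (auto intro: finite_subset)
  qed
  show ?thesis using ext emb avoid fin by blast
qed

end
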